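(* Let $N\ge 2$, let $0<\gamma_1\le\gamma_2\le\dots\le\gamma_N$ and $\Gamma_{\mathrm d}>0$. Among all spanning trees $T$ on $\{1,\dots,N\}$, the path $P$ with edges $\{1,2\},\{2,3\},\dots,\{N-1,N\}$ maximizes $R_{\mathrm c}(T)$, and $$R_{\mathrm c}(P)=\frac{1}{2(N-1)}\max\Big\{0,\ \min\Big(\big\{\log_2\big(\gamma_i+\tfrac{\gamma_i}{\gamma_i+\gamma_{i+1}}\big): 1\le i\le N-1\big\}\cup\{\log_2(1+\Gamma_{\mathrm d})\}\Big)\Big\}.$$
   Context: For distinct $i,j\in\{1,\dots,N\}$ put $\varphi(i,j)=\log_2\!\big(\gamma_i+\frac{\gamma_i}{\gamma_i+\gamma_j}\big)$. For a spanning tree $T$ on vertex set $\{1,\dots,N\}$ with edge set $E(T)$, define the common rate $$R_{\mathrm c}(T)=\frac{1}{2(N-1)}\max\Big\{0,\ \min\Big(\{\varphi(i,j): \{i,j\}\in E(T)\ \text{(both orders)}\}\cup\{\log_2(1+\Gamma_{\mathrm d})\}\Big)\Big\}.$$ (Interpretation: user $i$'s rate is bounded by $\frac{1}{2(N-1)}\varphi(i,j)$ for every neighbor $j$ of $i$ in $T$ and by the downlink bound $\frac{1}{2(N-1)}\log_2(1+\Gamma_{\mathrm d})$; the common rate is the minimum over users, clipped at $0$.) *)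

theory Defs
  imports Complex_Main
begin

definition edge_set_on :: "nat \<Rightarrow> nat set set \<Rightarrow> bool" where
  "edge_set_on N E \<longleftrightarrow> (\<forall>e\<in>E. \<exists>i j. i \<noteq> j \<and> i \<in> {1..N} \<and> j \<in> {1..N} \<and> e = {i, j})"

definition adj_rel :: "nat set set \<Rightarrow> (nat \<times> nat) set" where
  "adj_rel E = {(i, j). i \<noteq> j \<and> {i, j} \<in> E}"

definition graph_connected :: "nat \<Rightarrow> nat set set \<Rightarrow> bool" where
  "graph_connected N E \<longleftrightarrow> (\<forall>i\<in>{1..N}. \<forall>j\<in>{1..N}. (i, j) \<in> (adj_rel E)\<^sup>*)"

definition spanning_tree :: "nat \<Rightarrow> nat set set \<Rightarrow> bool" where
  "spanning_tree N E \<longleftrightarrow> edge_set_on N E \<and> graph_connected N E \<and>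
     (\<forall>e\<in>E. \<not> graph_connected N (E - {e}))"

definition phi :: "(nat \<Rightarrow> real) \<Rightarrow> nat \<Rightarrow> nat \<Rightarrow> real" where
  "phi \<gamma> i j = log 2 (\<gamma> i + \<gamma> i / (\<gamma> i + \<gamma> j))"

definition Rc :: "nat \<Rightarrow> (nat \<Rightarrow> real) \<Rightarrow> real \<Rightarrow> nat set set \<Rightarrow> real" where
  "Rc N \<gamma> \<Gamma>d T = 1 / (2 * (real N - 1)) *
     max 0 (Min ({phi \<gamma> i j | i j. {i, j} \<in> T \<and> i \<noteq> j} \<union> {log 2 (1 + \<Gamma>d)}))"

definition path_tree :: "nat \<Rightarrow> nat set set" where
  "path_tree N = {{i, i + 1} | i. 1 \<le> i \<and> i \<le> N - 1}"

end

theory Submission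
  imports Defs
begin

lemma gam_mono:
  assumes "\<And>i. 1 \<le> i \<Longrightarrow> i < N \<Longrightarrow> \<gamma> i \<le> \<gamma> (i + 1)"
  shows "1 \<le> i \<Longrightarrow> i + d \<le> N \<Longrightarrow> \<gamma> i \<le> (\<gamma>::nat\<Rightarrow>real) (i + d)"
proof (induction d)
  case 0 then show ?case by simp
next
  case (Suc d)
  then have "\<gamma> i \<le> \<gamma> (i + d)" by simp
  also have "\<dots> \<le> \<gamma> (i + d + 1)" using assms[of "i+d"] Suc.prems by simp
  finally show ?case by simp
qed

lemma gam_mono2:
  assumes "\<And>i. 1 \<le> i \<Longrightarrow> i < N \<Longrightarrow> \<gamma> i \<le> \<gamma> (i + 1)"
    and "1 \<le> i" "i \<le> j" "j \<le> N"
  shows "\<gamma> i \<le> (\<gamma>::nat\<Rightarrow>real) j"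
proof -
  have "\<gamma> i \<le> \<gamma> (i + (j - i))" by (rule gam_mono[of N \<gamma> i "j - i"]) (use assms in auto)
  then show ?thesis using assms by simp
qed

lemma g_mono:
  fixes a a' b b' :: real
  assumes "0 < a" "a \<le> a'" "0 < b'" "b' \<le> b"
  shows "log 2 (a + a/(a+b)) \<le> log 2 (a' + a'/(a'+b'))"
proof -
  have "a * (a' + b') \<le> a' * (a + b)"
  proof -
    have "a * b' \<le> a' * b" using assms by (intro mult_mono) auto
    then show ?thesis by (simp add: algebra_simps)
  qed
  then have "a/(a+b) \<le> a'/(a'+b')" using assms by (simp add: divide_simps)
  then have "a + a/(a+b) \<le> a' + a'/(a'+b')" using assms by simp
  moreover have "0 < a + a/(a+b)" using assms by (simp add: add_pos_nonneg)
  ultimately show ?thesis by simp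
qed

lemma cross:
  assumes "(a, b) \<in> r\<^sup>*"
  shows "a \<le> (k::nat) \<Longrightarrow> k < b \<Longrightarrow> \<exists>x y. (x, y) \<in> r \<and> x \<le> k \<and> k < y"
  using assms
proof (induction rule: rtrancl_induct)
  case base then show ?case by simp
next
  case (step y z)
  show ?case
  proof (cases "y \<le> k")
    case True then show ?thesis using step by blast
  next
    case False then show ?thesis using step by simp
  qed
qed

lemma closed_below:
  assumes "(a, b) \<in> (adj_rel (path_tree N - {{k, k+1}}))\<^sup>*" "a \<le> k"
  shows "b \<le> k"
  using assms
proof (induction rule: rtrancl_induct)
  case base then show ?case by simp
next
  case (step y z)
  then have yk: "y \<le> k" by simp
  from step(2) obtain i where e: "{y, z} = {i, i+1}" "{i, i+1} \<noteq> {k, k+1}" "y \<noteq> z"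
    unfolding adj_rel_def path_tree_def by auto
  then have "i \<noteq> k" by auto
  from e(1) have "(y = i \<and> z = i+1) \<or> (y = i+1 \<and> z = i)"
    by (metis doubleton_eq_iff)
  then show ?case using yk \<open>i \<noteq> k\<close> by auto
qed

lemma path_conn:
  assumes "1 \<le> i"
  shows "i + d \<le> N \<Longrightarrow> (i, i + d) \<in> (adj_rel (path_tree N))\<^sup>* \<and> (i + d, i) \<in> (adj_rel (path_tree N))\<^sup>*"
proof (induction d)
  case 0 then show ?case by simp
next
  case (Suc d)
  have m: "{i+d, i+d+1} \<in> path_tree N" unfolding path_tree_def using Suc.prems assms
    by (intro CollectI exI[of _ "i+d"]) auto
  have "(i+d, i+d+1) \<in> adj_rel (path_tree N)" "(i+d+1, i+d) \<in> adj_rel (path_tree N)"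
    unfolding adj_rel_def using m by (auto simp: insert_commute)
  moreover have "(i, i + d) \<in> (adj_rel (path_tree N))\<^sup>*" "(i + d, i) \<in> (adj_rel (path_tree N))\<^sup>*"
    using Suc by auto
  ultimately have "(i, i + d + 1) \<in> (adj_rel (path_tree N))\<^sup>*" "(i + d + 1, i) \<in> (adj_rel (path_tree N))\<^sup>*"
    by (meson rtrancl.rtrancl_into_rtrancl converse_rtrancl_into_rtrancl)+
  then show ?case by simp
qed

lemma path_spanning:
  assumes "N \<ge> 2"
  shows "spanning_tree N (path_tree N)"
proof -
  have E: "edge_set_on N (path_tree N)"
    unfolding edge_set_on_def path_tree_def
  proof (intro ballI)
    fix e assume "e \<in> {{i, i + 1} |i. 1 \<le> i \<and> i \<le> N - 1}"
    then obtain i where "e = {i, i+1}" "1 \<le> i" "i \<le> N - 1" by blast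
    then show "\<exists>i j. i \<noteq> j \<and> i \<in> {1..N} \<and> j \<in> {1..N} \<and> e = {i, j}"
      by (intro exI[of _ i] exI[of _ "i+1"]) auto
  qed
  have C: "graph_connected N (path_tree N)"
    unfolding graph_connected_def
  proof (intro ballI)
    fix i j assume ij: "i \<in> {1..N}" "j \<in> {1..N}"
    show "(i, j) \<in> (adj_rel (path_tree N))\<^sup>*"
    proof (cases "i \<le> j")
      case True then show ?thesis using path_conn[of i "j - i" N] ij by simp
    next
      case False then show ?thesis using path_conn[of j "i - j" N] ij by simp
    qed
  qed
  have M: "\<forall>e\<in>path_tree N. \<not> graph_connected N (path_tree N - {e})"
  proof
    fix e assume "e \<in> path_tree N"
    then obtain k where k: "e = {k, k+1}" "1 \<le> k" "k \<le> N - 1" unfolding path_tree_def by auto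
    show "\<not> graph_connected N (path_tree N - {e})"
    proof
      assume "graph_connected N (path_tree N - {e})"
      then have "(k, k+1) \<in> (adj_rel (path_tree N - {e}))\<^sup>*"
        unfolding graph_connected_def using k assms by auto
      then have "k + 1 \<le> k" using closed_below k(1) by blast
      then show False by simp
    qed
  qed
  show ?thesis unfolding spanning_tree_def using E C M by blast
qed

lemma Min_le_Min:
  fixes A B :: "real set"
  assumes "finite A" "finite B" "B \<noteq> {}" "\<forall>b\<in>B. \<exists>a\<in>A. a \<le> b"
  shows "Min A \<le> Min B"
proof -
  have "Min B \<in> B" using assms by simp
  then obtain a where "a \<in> A" "a \<le> Min B" using assms by blast
  then show ?thesis using assms(1) by (meson Min_le order_trans)
qed

theorem theorem2:
  fixes N :: nat and \<gamma> :: "nat \<Rightarrow> real" and \<Gamma>d :: real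
  assumes "N \<ge> 2"
    and "\<gamma> 1 > 0"
    and "\<And>i. 1 \<le> i \<Longrightarrow> i < N \<Longrightarrow> \<gamma> i \<le> \<gamma> (i + 1)"
    and "\<Gamma>d > 0"
  shows "spanning_tree N (path_tree N)
    \<and> (\<forall>T. spanning_tree N T \<longrightarrow> Rc N \<gamma> \<Gamma>d T \<le> Rc N \<gamma> \<Gamma>d (path_tree N))
    \<and> Rc N \<gamma> \<Gamma>d (path_tree N) = 1 / (2 * (real N - 1)) *
        max 0 (Min ({log 2 (\<gamma> i + \<gamma> i / (\<gamma> i + \<gamma> (i + 1))) | i. 1 \<le> i \<and> i \<le> N - 1}
                    \<union> {log 2 (1 + \<Gamma>d)}))"
proof -
  have pos: "\<And>i. 1 \<le> i \<Longrightarrow> i \<le> N \<Longrightarrow> \<gamma> i > 0"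
  proof -
    fix i assume "1 \<le> i" "i \<le> N"
    then have "\<gamma> 1 \<le> \<gamma> i" using gam_mono2[of N \<gamma> 1 i] assms(3) by blast
    then show "\<gamma> i > 0" using assms(2) by simp
  qed
  have mono: "\<And>i j. 1 \<le> i \<Longrightarrow> i \<le> j \<Longrightarrow> j \<le> N \<Longrightarrow> \<gamma> i \<le> \<gamma> j"
    using gam_mono2[of N \<gamma>] assms(3) by blast
  define L where "L = log 2 (1 + \<Gamma>d)"
  define B where "B = {log 2 (\<gamma> i + \<gamma> i / (\<gamma> i + \<gamma> (i + 1))) | i. 1 \<le> i \<and> i \<le> N - 1}"
  define AP where "AP = {phi \<gamma> i j | i j. {i, j} \<in> path_tree N \<and> i \<noteq> j}"
  have finT: "finite {phi \<gamma> i j | i j. {i, j} \<in> T \<and> i \<noteq> j}" if eT: "edge_set_on N T" for T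
  proof -
    have "{phi \<gamma> i j | i j. {i, j} \<in> T \<and> i \<noteq> j} \<subseteq> (\<lambda>(i,j). phi \<gamma> i j) ` ({1..N} \<times> {1..N})"
    proof
      fix x assume "x \<in> {phi \<gamma> i j | i j. {i, j} \<in> T \<and> i \<noteq> j}"
      then obtain i j where x: "x = phi \<gamma> i j" "{i,j} \<in> T" "i \<noteq> j" by auto
      then obtain a b where "a \<in> {1..N}" "b \<in> {1..N}" "{i,j} = {a,b}"
        using eT x(2) unfolding edge_set_on_def by blast
      then have "i \<in> {1..N}" "j \<in> {1..N}" by auto
      then show "x \<in> (\<lambda>(i,j). phi \<gamma> i j) ` ({1..N} \<times> {1..N})" using x by force
    qed
    then show ?thesis by (rule finite_subset) simp
  qed
  have ST: "spanning_tree N (path_tree N)" using path_spanning assms(1) by simp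
  have finAP: "finite AP" unfolding AP_def using ST finT spanning_tree_def by blast
  have finB: "finite B" unfolding B_def by simp
  have BA: "B \<subseteq> AP"
  proof
    fix x assume "x \<in> B"
    then obtain i where i: "x = phi \<gamma> i (i+1)" "1 \<le> i" "i \<le> N - 1" unfolding B_def phi_def by auto
    have "{i, i+1} \<in> path_tree N" unfolding path_tree_def using i by auto
    then show "x \<in> AP" unfolding AP_def using i by (intro CollectI exI[of _ i] exI[of _ "i+1"]) simp
  qed
  have AB: "\<forall>a\<in>AP. \<exists>b\<in>B. b \<le> a"
  proof
    fix a assume "a \<in> AP"
    then obtain i j k where a: "a = phi \<gamma> i j" "{i,j} = {k, k+1}" "1 \<le> k" "k \<le> N - 1"
      unfolding AP_def path_tree_def by auto
    have b: "phi \<gamma> k (k+1) \<in> B" unfolding B_def phi_def using a by auto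
    from a(2) have "(i = k \<and> j = k+1) \<or> (i = k+1 \<and> j = k)" by (metis doubleton_eq_iff)
    then show "\<exists>b\<in>B. b \<le> a"
    proof
      assume "i = k \<and> j = k+1" then show ?thesis using a b by auto
    next
      assume ij: "i = k+1 \<and> j = k"
      have "phi \<gamma> k (k+1) \<le> phi \<gamma> (k+1) k" unfolding phi_def
        using g_mono[of "\<gamma> k" "\<gamma> (k+1)" "\<gamma> k" "\<gamma> (k+1)"] pos[of k] mono[of k "k+1"] a by simp
      then show ?thesis using a b ij by auto
    qed
  qed
  have Bne: "B \<noteq> {}" unfolding B_def using assms(1) by auto
  have eqmin: "Min (AP \<union> {L}) = Min (B \<union> {L})"
  proof (rule antisym)
    show "Min (AP \<union> {L}) \<le> Min (B \<union> {L})"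
      by (rule Min_le_Min) (use finAP finB BA in auto)
    show "Min (B \<union> {L}) \<le> Min (AP \<union> {L})"
      by (rule Min_le_Min) (use finAP finB AB in auto)
  qed
  have RcP: "Rc N \<gamma> \<Gamma>d (path_tree N) = 1 / (2 * (real N - 1)) * max 0 (Min (B \<union> {L}))"
    unfolding Rc_def using eqmin AP_def L_def by simp
  have cmp: "Rc N \<gamma> \<Gamma>d T \<le> Rc N \<gamma> \<Gamma>d (path_tree N)" if T: "spanning_tree N T" for T
  proof -
    define AT where "AT = {phi \<gamma> i j | i j. {i, j} \<in> T \<and> i \<noteq> j}"
    have finAT: "finite AT" unfolding AT_def using T finT spanning_tree_def by blast
    have TB: "\<forall>b\<in>B. \<exists>a\<in>AT. a \<le> b"
    proof
      fix b assume "b \<in> B"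
      then obtain k where k: "b = phi \<gamma> k (k+1)" "1 \<le> k" "k \<le> N - 1" unfolding B_def phi_def by auto
      have gc: "graph_connected N T" using T unfolding spanning_tree_def by blast
      have "k \<in> {1..N}" "k+1 \<in> {1..N}" using k assms(1) by auto
      then have "(k, k+1) \<in> (adj_rel T)\<^sup>*" using gc unfolding graph_connected_def by blast
      then have "\<exists>x y. (x, y) \<in> adj_rel T \<and> x \<le> k \<and> k < y" using cross[of k "k+1" "adj_rel T" k] by simp
      then obtain x y where xy: "(x,y) \<in> adj_rel T" "x \<le> k" "k < y" by blast
      then have xyT: "{x,y} \<in> T" "x \<noteq> y" unfolding adj_rel_def by auto
      have eT: "edge_set_on N T" using T unfolding spanning_tree_def by blast
      then obtain p q where "p \<in> {1..N}" "q \<in> {1..N}" "{x,y} = {p,q}"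
        using xyT(1) unfolding edge_set_on_def by blast
      then have xr: "1 \<le> x" "y \<le> N" by auto
      have "phi \<gamma> x y \<le> phi \<gamma> k (k+1)" unfolding phi_def
        using g_mono[of "\<gamma> x" "\<gamma> k" "\<gamma> (k+1)" "\<gamma> y"] pos[of x] pos[of "k+1"]
          mono[of x k] mono[of "k+1" y] xy xr k by simp
      moreover have "phi \<gamma> x y \<in> AT" unfolding AT_def using xyT by blast
      ultimately show "\<exists>a\<in>AT. a \<le> b" using k by blast
    qed
    have "Min (AT \<union> {L}) \<le> Min (B \<union> {L})"
      by (rule Min_le_Min) (use finAT finB TB in auto)
    then have "max 0 (Min (AT \<union> {L})) \<le> max 0 (Min (B \<union> {L}))" by simp
    moreover have "0 \<le> 1 / (2 * (real N - 1))" using assms(1) by simp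
    ultimately have "1 / (2 * (real N - 1)) * max 0 (Min (AT \<union> {L})) \<le> 1 / (2 * (real N - 1)) * max 0 (Min (B \<union> {L}))"
      by (rule mult_left_mono)
    then show ?thesis unfolding RcP unfolding Rc_def AT_def[symmetric] L_def[symmetric] .
  qed
  show ?thesis using ST cmp RcP B_def L_def by simp
qed

end
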